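(* Let $N\ge 0$ be an integer, and let $Q_K(f)=\sum_{k=1}^K w_k f(\xi_k)$ be a quadrature rule on the unit sphere $S^2\subset\mathbb{R}^3$ with real weights $w_k$ and nodes $\xi_k\in S^2$ having polar coordinates $(\theta_k,\phi_k)$, i.e. $\xi_k=(\sin\theta_k\cos\phi_k,\sin\theta_k\sin\phi_k,\cos\theta_k)$. Suppose: (i) for every $k$ there is a unique $j$ such that $\xi_j$ is the point with polar coordinates $(\theta_k,\phi_k+\pi)$ (i.e. $\xi_j=R_z\xi_k$ where $R_z(x,y,z)=(-x,-y,z)$), and $w_j=w_k$; (ii) for every $k$ there is a unique $j$ such that $\xi_j$ is the point with coordinates $(\theta_k+\pi,\pi-\phi_k)$ under the parametrization $(\theta,\phi)\mapsto(\sin\theta\cos\phi,\sin\theta\sin\phi,\cos\theta)$ (i.e. $\xi_j=R_x\xi_k$ where $R_x(x,y,z)=(x,-y,-z)$), and $w_j=w_k$. Then the system $$\sum_{k=1}^K w_k Y_n^m(\theta_k,\phi_k)=\sqrt{4\pi}\,\delta_{n0}\delta_{m0}\quad\text{for all integers } |m|\le n\le N$$ holds if and only if the following real system holds: $$\operatorname{Re}\sum_{k=1}^K w_k Y_n^m(\theta_k,\phi_k)=\sqrt{4\pi}\,\delta_{n0}\delta_{m0}\quad\text{for all }(m,n)\text{ with } m,n \text{ even},\ 0\le m\le n\le N,$$ $$\operatorname{Im}\sum_{k=1}^K w_k Y_n^m(\theta_k,\phi_k)=0\quad\text{for all }(m,n)\text{ with } m \text{ even},\ n\text{ odd},\ 0<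 m\le n\le N.$$
   Context: For integers $|m|\le n$, the spherical harmonic of degree $n$ and order $m$ is $$Y_n^m(\theta,\phi)=(-1)^m\sqrt{\frac{2n+1}{4\pi}\frac{(n-m)!}{(n+m)!}}\,P_n^m(\cos\theta)\,e^{im\phi},$$ where $P_n^m$ is the associated Legendre function (with the standard definition for negative $m$), regarded as a function on $S^2$ via polar coordinates $(\theta,\phi)\in[0,\pi]\times[0,2\pi)$. These satisfy $\int_{S^2}Y_n^m\,d\sigma=\sqrt{4\pi}\,\delta_{n0}\delta_{m0}$, so the first system in the claim expresses that $Q_K$ integrates exactly all spherical harmonics of degree at most $N$. *)

theory Defs
  imports Complex_Main "HOL-Computational_Algebra.Polynomial"
begin

text \<open>Associated Legendre function P_n^m (no Condon-Shortley phase; that phase is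
  the explicit (-1)^m factor in the spherical harmonic).\<close>

definition assoc_legendre_nonneg :: "nat \<Rightarrow> nat \<Rightarrow> real \<Rightarrow> real" where
  "assoc_legendre_nonneg n m x =
     sqrt (1 - x\<^sup>2) ^ m *
     poly ((pderiv ^^ (n + m)) ([:-1, 0, 1:] ^ n)) x / (2 ^ n * fact n)"

definition assoc_legendre :: "nat \<Rightarrow> int \<Rightarrow> real \<Rightarrow> real" where
  "assoc_legendre n m x =
     (if m \<ge> 0 then assoc_legendre_nonneg n (nat m) x
      else (-1) ^ nat (-m) * (fact (n - nat (-m)) / fact (n + nat (-m)))
             * assoc_legendre_nonneg n (nat (-m)) x)"

definition sph_harm :: "nat \<Rightarrow> int \<Rightarrow> real \<Rightarrow> real \<Rightarrow> complex" where
  "sph_harm n m \<theta> \<phi> =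
     complex_of_real ((-1) powi m *
       sqrt ((2 * real n + 1) / (4 * pi) * (fact (nat (int n - m)) / fact (nat (int n + m))))
       * assoc_legendre n m (cos \<theta>))
     * cis (real_of_int m * \<phi>)"

definition sph_point :: "real \<Rightarrow> real \<Rightarrow> real \<times> real \<times> real" where
  "sph_point \<theta> \<phi> = (sin \<theta> * cos \<phi>, sin \<theta> * sin \<phi>, cos \<theta>)"

definition Rz :: "real \<times> real \<times> real \<Rightarrow> real \<times> real \<times> real" where
  "Rz p = (case p of (x, y, z) \<Rightarrow> (-x, -y, z))"

definition Rx :: "real \<times> real \<times> real \<Rightarrow> real \<times> real \<times> real" where
  "Rx p = (case p of (x, y, z) \<Rightarrow> (x, -y, -z))"

end

theory Submission imports Defs begin

lemma poly_pderiv_parity: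
  fixes p :: "real poly"
  assumes "\<And>x. poly p (-x) = s * poly p x"
  shows "poly (pderiv p) (-x) = - s * poly (pderiv p) x"
proof -
  have d1: "((\<lambda>x. poly p (-x)) has_real_derivative (poly (pderiv p) (-x) * -1)) (at x)"
    by (rule DERIV_chain2[OF poly_DERIV]) (auto intro!: derivative_eq_intros)
  have d2: "((\<lambda>x. s * poly p x) has_real_derivative s * poly (pderiv p) x) (at x)"
    by (intro DERIV_cmult poly_DERIV)
  have "(\<lambda>x. poly p (-x)) = (\<lambda>x. s * poly p x)" using assms by auto
  with d1 d2 have "poly (pderiv p) (-x) * -1 = s * poly (pderiv p) x"
    using DERIV_unique by metis
  then show ?thesis by simp
qed

lemma poly_Dp_parity:
  "poly ((pderiv ^^ k) ([:-1,0,1:]^n)) (-x) = (-1)^k * poly ((pderiv ^^ k) ([:-1,0,1:]^n)) (x::real)"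
proof (induction k arbitrary: x)
  case 0 then show ?case by (simp add: poly_power)
next
  case (Suc k)
  show ?case using poly_pderiv_parity[of "(pderiv ^^ k) ([:-1,0,1:]^n)" "(-1)^k" x] Suc
    by simp
qed

definition cH :: "nat \<Rightarrow> nat \<Rightarrow> real" where
  "cH n m = (-1)^m * sqrt((2*real n+1)/(4*pi) * (fact(n-m)/fact(n+m))) / (2^n * fact n)"

definition H :: "nat \<Rightarrow> nat \<Rightarrow> real \<times> real \<times> real \<Rightarrow> complex" where
  "H n m p = (case p of (x,y,z) \<Rightarrow> complex_of_real (cH n m * poly ((pderiv^^(n+m)) ([:-1,0,1:]^n)) z) * Complex x y ^ m)"

lemma sph_harm_H:
  assumes "0 \<le> \<theta>" "\<theta> \<le> pi"
  shows "sph_harm n (int m) \<theta> \<phi> = H n m (sph_point \<theta> \<phi>)"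
proof -
  have "sin \<theta> \<ge> 0" using assms by (simp add: sin_ge_zero)
  then have s: "sqrt (1 - (cos \<theta>)\<^sup>2) = sin \<theta>"
    by (simp add: sin_squared_eq[symmetric])
  have c: "Complex (sin \<theta> * cos \<phi>) (sin \<theta> * sin \<phi>) = complex_of_real (sin \<theta>) * cis \<phi>"
    by (simp add: complex_eq_iff)
  have ci: "cis (real_of_int (int m) * \<phi>) = cis \<phi> ^ m" by (simp add: DeMoivre)
  have n1: "nat (int n + int m) = n + m" by (simp add: nat_add_distrib)
  have n2: "nat (int n - int m) = n - m" by (simp add: nat_diff_distrib')
  show ?thesis
    unfolding sph_harm_def H_def sph_point_def assoc_legendre_def assoc_legendre_nonneg_def cH_def
    by (simp add: s c DeMoivre power_mult_distrib n1 n2)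
qed

lemma H_Rz: "H n m (Rz p) = (-1)^m * H n m p"
proof -
  obtain x y z where p: "p = (x,y,z)" by (cases p) auto
  have c: "Complex (-x) (-y) = - Complex x y" by (simp add: complex_eq_iff)
  have e: "Complex (-x) (-y) ^ m = (-1)^m * Complex x y ^ m" unfolding c by (rule power_minus)
  show ?thesis by (simp add: p Rz_def H_def e)
qed

lemma H_Rx: "H n m (Rx p) = (-1)^(n+m) * cnj (H n m p)"
proof -
  obtain x y z where p: "p = (x,y,z)" by (cases p) auto
  have "Complex x (-y) = cnj (Complex x y)" by (simp add: complex_eq_iff)
  then show ?thesis by (simp add: p Rx_def H_def poly_Dp_parity)
qed

lemma H_0_real: "Im (H n 0 p) = 0"
  by (cases p) (simp add: H_def)

lemma sph_harm_neg:
  "sph_harm n (- int m) \<theta> \<phi> = (-1)^m * cnj (sph_harm n (int m) \<theta> \<phi>)"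
proof (cases "m = 0")
  case True then show ?thesis by (simp add: sph_harm_def)
next
  case False
  define a where "a = (2 * real n + 1) / (4 * pi)"
  define r where "r = (fact (n - m) / fact (n + m) :: real)"
  have r: "r > 0" unfolding r_def by simp
  have key: "sqrt (a * (fact (n+m) / fact (n-m))) * r = sqrt (a * r)"
  proof -
    have "fact (n+m) / fact (n-m) = 1 / r" unfolding r_def by simp
    then have "sqrt (a * (fact (n+m) / fact (n-m))) * r = sqrt (a / r) * sqrt (r^2)"
      using r by simp
    also have "\<dots> = sqrt (a / r * r^2)" by (simp only: real_sqrt_mult)
    also have "a / r * r^2 = a * r" using r by (simp add: power2_eq_square)
    finally show ?thesis .
  qed
  have cc: "cis (- (real m * \<phi>)) = cnj (cis (real m * \<phi>))" by (simp add: cis_cnj)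
  define A where "A = assoc_legendre_nonneg n m (cos \<theta>)"
  have n1: "nat (int n + int m) = n + m" by (simp add: nat_add_distrib)
  have n2: "nat (int n - int m) = n - m" by (simp add: nat_diff_distrib')
  have n3: "nat (int n - - int m) = n + m" by (simp add: nat_add_distrib)
  have n4: "nat (int n + - int m) = n - m" by (simp add: nat_diff_distrib')
  have L: "sph_harm n (- int m) \<theta> \<phi> = complex_of_real ((-1)^m * sqrt (a * (fact (n+m) / fact (n-m))) * ((-1)^m * r * A)) * cis (- (real m * \<phi>))"
    unfolding sph_harm_def assoc_legendre_def a_def r_def A_def using False
    by (simp add: n1 n2 n3 n4 power_int_def)
  have R: "sph_harm n (int m) \<theta> \<phi> = complex_of_real ((-1)^m * sqrt (a * r) * A) * cis (real m * \<phi>)"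
    unfolding sph_harm_def assoc_legendre_def a_def r_def A_def using False
    by (simp add: n1 n2 n3 n4 power_int_def)
  have L2: "sph_harm n (- int m) \<theta> \<phi> = complex_of_real (sqrt (a * r) * A) * cnj (cis (real m * \<phi>))"
  proof -
    have "(-1::real)^m * sqrt (a * (fact (n+m) / fact (n-m))) * ((-1)^m * r * A)
        = ((-1)^m * (-1)^m) * (sqrt (a * (fact (n+m) / fact (n-m))) * r) * A" by (simp add: algebra_simps)
    also have "\<dots> = ((-1)^m * (-1)^m) * sqrt (a * r) * A" by (simp only: key)
    also have "\<dots> = sqrt (a * r) * A" by (simp add: power_mult_distrib[symmetric])
    finally have X: "(-1::real)^m * sqrt (a * (fact (n+m) / fact (n-m))) * ((-1)^m * r * A) = sqrt (a * r) * A" .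
    show ?thesis unfolding L X cc ..
  qed
  show ?thesis unfolding L2 R
    by (simp add: power_mult_distrib[symmetric] mult.assoc[symmetric])
qed


lemma sym_sum:
  fixes P :: "nat \<Rightarrow> 'p" and R :: "'p \<Rightarrow> 'p" and w :: "nat \<Rightarrow> real"
  assumes inv: "\<And>p. R (R p) = p"
    and sym: "\<And>k. k \<in> A \<Longrightarrow> (\<exists>!j. j \<in> A \<and> P j = R (P k)) \<and> (\<forall>j\<in>A. P j = R (P k) \<longrightarrow> w j = w k)"
  shows "(\<Sum>k\<in>A. F (w k) (P k)) = (\<Sum>k\<in>A. F (w k) (R (P k)))"
proof -
  have injP: "k = k'" if k: "k\<in>A" "k'\<in>A" "P k = P k'" for k k'
  proof -
    from sym[OF k(1)] obtain j where j: "j\<in>A" "P j = R (P k)" by blast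
    have "R (P j) = P k" using j inv by simp
    with sym[OF j(1)] k show "k = k'" by metis
  qed
  define \<sigma> where "\<sigma> k = (THE j. j \<in> A \<and> P j = R (P k))" for k
  have \<sigma>: "\<sigma> k \<in> A \<and> P (\<sigma> k) = R (P k)" if "k\<in>A" for k
    unfolding \<sigma>_def using sym[OF that] by (metis (mono_tags, lifting) theI')
  have \<sigma>\<sigma>: "\<sigma> (\<sigma> k) = k" if "k\<in>A" for k
    using \<sigma>[OF that] \<sigma>[of "\<sigma> k"] injP[of "\<sigma> (\<sigma> k)" k] inv that by auto
  have bij: "bij_betw \<sigma> A A"
    by (rule bij_betw_byWitness[where f'=\<sigma>]) (use \<sigma> \<sigma>\<sigma> in auto)
  have w: "w (\<sigma> k) = w k" if "k\<in>A" for k using sym[OF that] \<sigma>[OF that] by blast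
  have "(\<Sum>k\<in>A. F (w k) (P k)) = (\<Sum>k\<in>A. F (w (\<sigma> k)) (P (\<sigma> k)))"
    using sum.reindex_bij_betw[OF bij, of "\<lambda>k. F (w k) (P k)"] by simp
  also have "\<dots> = (\<Sum>k\<in>A. F (w k) (R (P k)))" by (rule sum.cong) (simp_all add: \<sigma> w)
  finally show ?thesis .
qed

lemma Rz_inv: "Rz (Rz p) = p" by (cases p) (simp add: Rz_def)
lemma Rx_inv: "Rx (Rx p) = p" by (cases p) (simp add: Rx_def)

theorem theorem1:
  fixes N K :: nat and w \<theta> \<phi> :: "nat \<Rightarrow> real"
  assumes coords: "\<And>k. k \<in> {1..K} \<Longrightarrow> 0 \<le> \<theta> k \<and> \<theta> k \<le> pi \<and> 0 \<le> \<phi> k \<and> \<phi> k < 2 * pi"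
    and symz: "\<And>k. k \<in> {1..K} \<Longrightarrow>
        (\<exists>!j. j \<in> {1..K} \<and> sph_point (\<theta> j) (\<phi> j) = Rz (sph_point (\<theta> k) (\<phi> k)))
        \<and> (\<forall>j\<in>{1..K}. sph_point (\<theta> j) (\<phi> j) = Rz (sph_point (\<theta> k) (\<phi> k)) \<longrightarrow> w j = w k)"
    and symx: "\<And>k. k \<in> {1..K} \<Longrightarrow>
        (\<exists>!j. j \<in> {1..K} \<and> sph_point (\<theta> j) (\<phi> j) = Rx (sph_point (\<theta> k) (\<phi> k)))
        \<and> (\<forall>j\<in>{1..K}. sph_point (\<theta> j) (\<phi> j) = Rx (sph_point (\<theta> k) (\<phi> k)) \<longrightarrow> w j = w k)"
  shows "(\<forall>n m. n \<le> N \<and> \<bar>m\<bar> \<le> int n \<longrightarrow>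
            (\<Sum>k\<in>{1..K}. complex_of_real (w k) * sph_harm n m (\<theta> k) (\<phi> k))
              = (if n = 0 \<and> m = 0 then complex_of_real (sqrt (4 * pi)) else 0))
    \<longleftrightarrow>
         ((\<forall>n m. even n \<and> even m \<and> 0 \<le> m \<and> m \<le> int n \<and> n \<le> N \<longrightarrow>
            Re (\<Sum>k\<in>{1..K}. complex_of_real (w k) * sph_harm n m (\<theta> k) (\<phi> k))
              = (if n = 0 \<and> m = 0 then sqrt (4 * pi) else 0))
          \<and> (\<forall>n m. odd n \<and> even m \<and> 0 < m \<and> m \<le> int n \<and> n \<le> N \<longrightarrow>
            Im (\<Sum>k\<in>{1..K}. complex_of_real (w k) * sph_harm n m (\<theta> k) (\<phi> k)) = 0))"
proof -
  define P where "P k = sph_point (\<theta> k) (\<phi> k)" for k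
  define T where "T n m = (\<Sum>k\<in>{1..K}. complex_of_real (w k) * H n m (P k))" for n m
  define S where "S n m = (\<Sum>k\<in>{1..K}. complex_of_real (w k) * sph_harm n m (\<theta> k) (\<phi> k))" for n m
  have hS: "S n (int m) = T n m" for n m
    unfolding S_def T_def P_def by (rule sum.cong) (use coords sph_harm_H in auto)
  have Tz: "T n m = (-1)^m * T n m" for n m
  proof -
    have "T n m = (\<Sum>k\<in>{1..K}. complex_of_real (w k) * H n m (Rz (P k)))"
      unfolding T_def
      by (rule sym_sum[where F="\<lambda>a p. complex_of_real a * H n m p"]) (rule Rz_inv, unfold P_def, rule symz, assumption)
    also have "\<dots> = (-1)^m * T n m" unfolding T_def H_Rz sum_distrib_left
      by (simp add: algebra_simps)
    finally show ?thesis .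
  qed
  have Tx: "T n m = (-1)^(n+m) * cnj (T n m)" for n m
  proof -
    have "T n m = (\<Sum>k\<in>{1..K}. complex_of_real (w k) * H n m (Rx (P k)))"
      unfolding T_def
      by (rule sym_sum[where F="\<lambda>a p. complex_of_real a * H n m p"]) (rule Rx_inv, unfold P_def, rule symx, assumption)
    also have "\<dots> = (-1)^(n+m) * cnj (T n m)" unfolding T_def H_Rx
      by (simp add: sum_distrib_left algebra_simps)
    finally show ?thesis .
  qed
  have Todd: "T n m = 0" if "odd m" for n m
    using Tz[of n m] that by simp
  have T0: "Im (T n 0) = 0" for n
    unfolding T_def by (simp add: H_0_real)
  have Sneg: "S n (- int m) = (-1)^m * cnj (S n (int m))" for n m
    unfolding S_def sph_harm_neg cnj_sum sum_distrib_left by (simp add: algebra_simps)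
  show ?thesis
  proof
    assume A: "\<forall>n m. n \<le> N \<and> \<bar>m\<bar> \<le> int n \<longrightarrow>
            (\<Sum>k\<in>{1..K}. complex_of_real (w k) * sph_harm n m (\<theta> k) (\<phi> k))
              = (if n = 0 \<and> m = 0 then complex_of_real (sqrt (4 * pi)) else 0)"
    show "(\<forall>n m. even n \<and> even m \<and> 0 \<le> m \<and> m \<le> int n \<and> n \<le> N \<longrightarrow>
            Re (\<Sum>k\<in>{1..K}. complex_of_real (w k) * sph_harm n m (\<theta> k) (\<phi> k))
              = (if n = 0 \<and> m = 0 then sqrt (4 * pi) else 0))
          \<and> (\<forall>n m. odd n \<and> even m \<and> 0 < m \<and> m \<le> int n \<and> n \<le> N \<longrightarrow>
            Im (\<Sum>k\<in>{1..K}. complex_of_real (w k) * sph_harm n m (\<theta> k) (\<phi> k)) = 0)"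
    proof (intro conjI allI impI)
      fix n m assume h: "even n \<and> even m \<and> 0 \<le> m \<and> m \<le> int n \<and> n \<le> N"
      then have "\<bar>m\<bar> \<le> int n" by simp
      with h A show "Re (\<Sum>k\<in>{1..K}. complex_of_real (w k) * sph_harm n m (\<theta> k) (\<phi> k))
              = (if n = 0 \<and> m = 0 then sqrt (4 * pi) else 0)" by simp
    next
      fix n m assume h: "odd n \<and> even m \<and> 0 < m \<and> m \<le> int n \<and> n \<le> N"
      then have "\<bar>m\<bar> \<le> int n" by simp
      with h A show "Im (\<Sum>k\<in>{1..K}. complex_of_real (w k) * sph_harm n m (\<theta> k) (\<phi> k)) = 0" by simp
    qed
  next
    assume B: "(\<forall>n m. even n \<and> even m \<and> 0 \<le> m \<and> m \<le> int n \<and> n \<le> N \<longrightarrow>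
            Re (\<Sum>k\<in>{1..K}. complex_of_real (w k) * sph_harm n m (\<theta> k) (\<phi> k))
              = (if n = 0 \<and> m = 0 then sqrt (4 * pi) else 0))
          \<and> (\<forall>n m. odd n \<and> even m \<and> 0 < m \<and> m \<le> int n \<and> n \<le> N \<longrightarrow>
            Im (\<Sum>k\<in>{1..K}. complex_of_real (w k) * sph_harm n m (\<theta> k) (\<phi> k)) = 0)"
    have B1: "\<forall>n m. even n \<and> even m \<and> 0 \<le> m \<and> m \<le> int n \<and> n \<le> N \<longrightarrow>
            Re (S n m) = (if n = 0 \<and> m = 0 then sqrt (4 * pi) else 0)"
      using B unfolding S_def by blast
    have B2: "\<forall>n m. odd n \<and> even m \<and> 0 < m \<and> m \<le> int n \<and> n \<le> N \<longrightarrow> Im (S n m) = 0"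
      using B unfolding S_def by blast
    have hR: "Re (T n m) = (if n = 0 \<and> m = 0 then sqrt (4 * pi) else 0)"
      if "even n" "even m" "m \<le> n" "n \<le> N" for n m
      using B1[rule_format, of n "int m"] that hS[of n m] by simp
    have hI: "Im (T n m) = 0" if "odd n" "even m" "0 < m" "m \<le> n" "n \<le> N" for n m
      using B2[rule_format, of n "int m"] that hS[of n m] by simp
    have pos: "T n m = (if n = 0 \<and> m = 0 then complex_of_real (sqrt (4 * pi)) else 0)"
      if "m \<le> n" "n \<le> N" for n m
    proof (cases "odd m")
      case True then show ?thesis using Todd by auto
    next
      case ev: False
      show ?thesis
      proof (cases "even n")
        case True
        have "T n m = cnj (T n m)" using Tx[of n m] True ev by simp
        then have "Im (T n m) = 0" by (simp add: complex_eq_iff)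
        then show ?thesis using hR[of n m] True ev that by (simp add: complex_eq_iff)
      next
        case False
        have "T n m = - cnj (T n m)" using Tx[of n m] False ev by simp
        then have "Re (T n m) = 0" by (simp add: complex_eq_iff)
        moreover have "Im (T n m) = 0"
          using hI[of n m] T0[of n] False ev that by (cases "m = 0") auto
        moreover have "n \<noteq> 0" using False by (metis dvd_0_right)
        ultimately show ?thesis by (simp add: complex_eq_iff)
      qed
    qed
    show "\<forall>n m. n \<le> N \<and> \<bar>m\<bar> \<le> int n \<longrightarrow>
            (\<Sum>k\<in>{1..K}. complex_of_real (w k) * sph_harm n m (\<theta> k) (\<phi> k))
              = (if n = 0 \<and> m = 0 then complex_of_real (sqrt (4 * pi)) else 0)"
    proof (intro allI impI)
      fix n m assume h: "n \<le> N \<and> \<bar>m\<bar> \<le> int n"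
      show "(\<Sum>k\<in>{1..K}. complex_of_real (w k) * sph_harm n m (\<theta> k) (\<phi> k))
              = (if n = 0 \<and> m = 0 then complex_of_real (sqrt (4 * pi)) else 0)"
      proof (cases "m \<ge> 0")
        case True
        define m' where "m' = nat m"
        have m: "m = int m'" using True unfolding m'_def by simp
        have le: "m' \<le> n" using h m by simp
        have "S n m = (if n = 0 \<and> m' = 0 then complex_of_real (sqrt (4 * pi)) else 0)"
          using pos[OF le] hS[of n m'] h unfolding m by simp
        then show ?thesis unfolding S_def m by simp
      next
        case False
        define m' where "m' = nat (- m)"
        have m: "m = - int m'" "m' > 0" using False unfolding m'_def by simp_all
        have le: "m' \<le> n" using h m by simp
        have "T n m' = 0" using pos[OF le] h m by simp
        then have "S n m = 0" using Sneg[of n m'] hS[of n m'] m by simp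
        then show ?thesis using m unfolding S_def by simp
      qed
    qed
  qed
qed

end
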